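(* Let $p,q$ be distinct primes, $n\geqslant1$, and let $S$ be a minimal generating set for a $C_{p^nq}$-transfer system. Then $|S|\leqslant 3k+1$ if $n=2k$, and $|S|\leqslant 3k+2$ if $n=2k+1$.
   Context: For a finite group $G$, an arrow is a pair $(H,K)$ of subgroups with $H\leqslant K$; identity arrows are those with $H=K$. A $G$-transfer system is a set of arrows containing all identities and closed under composition ($(H,K),(K,L)\Rightarrow(H,L)$), conjugation ($(H,K)\Rightarrow(gHg^{-1},gKg^{-1})$) and restriction ($(H,K)$ and $L\leqslant K\Rightarrow(H\cap L,L)$). For a set $S$ of non-identity arrows, $\langle S\rangle$ is the smallest transfer system containing $S$; $S$ is a minimal generating set of $\mathsf{T}$ if $\langle S\rangle=\mathsf{T}$ and $\langle S\setminus\{s\}\rangle\neq\mathsf{T}$ for all $s\in S$. *)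

theory Defs
  imports "HOL-Algebra.Elementary_Groups" "HOL-Computational_Algebra.Primes"
begin

definition arrows :: "('a, 'b) monoid_scheme \<Rightarrow> ('a set \<times> 'a set) set" where
  "arrows G = {(H, K). subgroup H G \<and> subgroup K G \<and> H \<subseteq> K}"

definition conj_set :: "('a, 'b) monoid_scheme \<Rightarrow> 'a \<Rightarrow> 'a set \<Rightarrow> 'a set" where
  "conj_set G g H = (\<lambda>h. g \<otimes>\<^bsub>G\<^esub> h \<otimes>\<^bsub>G\<^esub> inv\<^bsub>G\<^esub> g) ` H"

definition transfer_system :: "('a, 'b) monoid_scheme \<Rightarrow> ('a set \<times> 'a set) set \<Rightarrow> bool" where
  "transfer_system G T \<longleftrightarrow>
     T \<subseteq> arrows G \<and>
     (\<forall>H. subgroup H G \<longrightarrow> (H, H) \<in> T) \<and>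
     (\<forall>H K L. (H, K) \<in> T \<longrightarrow> (K, L) \<in> T \<longrightarrow> (H, L) \<in> T) \<and>
     (\<forall>H K g. (H, K) \<in> T \<longrightarrow> g \<in> carrier G \<longrightarrow> (conj_set G g H, conj_set G g K) \<in> T) \<and>
     (\<forall>H K L. (H, K) \<in> T \<longrightarrow> subgroup L G \<longrightarrow> L \<subseteq> K \<longrightarrow> (H \<inter> L, L) \<in> T)"

definition generated_ts :: "('a, 'b) monoid_scheme \<Rightarrow> ('a set \<times> 'a set) set \<Rightarrow> ('a set \<times> 'a set) set" where
  "generated_ts G S = \<Inter> {T. transfer_system G T \<and> S \<subseteq> T}"

definition minimal_generating_set ::
  "('a, 'b) monoid_scheme \<Rightarrow> ('a set \<times> 'a set) set \<Rightarrow> ('a set \<times> 'a set) set \<Rightarrow> bool" where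
  "minimal_generating_set G S T \<longleftrightarrow>
     S \<subseteq> arrows G \<and> (\<forall>(H, K) \<in> S. H \<noteq> K) \<and>
     generated_ts G S = T \<and>
     (\<forall>s \<in> S. generated_ts G (S - {s}) \<noteq> T)"

end

theory Submission
  imports Defs "HOL-Algebra.Multiplicative_Group"
begin

type_synonym pt = "nat \<times> bool"

definition gle :: "pt \<Rightarrow> pt \<Rightarrow> bool" where
  "gle x y \<longleftrightarrow> fst x \<le> fst y \<and> (snd x \<longrightarrow> snd y)"

definition gmeet :: "pt \<Rightarrow> pt \<Rightarrow> pt" where
  "gmeet x y = (min (fst x) (fst y), snd x \<and> snd y)"

definition closedC :: "nat \<Rightarrow> (pt \<times> pt) set \<Rightarrow> bool" where
  "closedC n C \<longleftrightarrow> (\<forall>x. fst x \<le> n \<longrightarrow> (x,x) \<in> C) \<and>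
     (\<forall>x y z. (x,y) \<in> C \<longrightarrow> (y,z) \<in> C \<longrightarrow> (x,z) \<in> C) \<and>
     (\<forall>x y z. (x,y) \<in> C \<longrightarrow> fst z \<le> n \<longrightarrow> gle z y \<longrightarrow> (gmeet x z, z) \<in> C)"

locale combctx =
  fixes n :: nat and S :: "(pt \<times> pt) set" and Cf :: "pt \<times> pt \<Rightarrow> (pt \<times> pt) set"
  assumes Ssub: "\<And>x y. (x,y) \<in> S \<Longrightarrow> fst y \<le> n \<and> gle x y \<and> x \<noteq> y"
  and Ccl: "\<And>s. s \<in> S \<Longrightarrow> closedC n (Cf s)"
  and Cgen: "\<And>s t. s \<in> S \<Longrightarrow> t \<in> S \<Longrightarrow> t \<noteq> s \<Longrightarrow> t \<in> Cf s"
  and Cnot: "\<And>s. s \<in> S \<Longrightarrow> s \<notin> Cf s"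
begin

lemma crefl: "s \<in> S \<Longrightarrow> i \<le> n \<Longrightarrow> ((i,b),(i,b)) \<in> Cf s"
  using Ccl unfolding closedC_def by fastforce

lemma ctrans: "s \<in> S \<Longrightarrow> (x,y) \<in> Cf s \<Longrightarrow> (y,z) \<in> Cf s \<Longrightarrow> (x,z) \<in> Cf s"
  using Ccl unfolding closedC_def by blast

lemma crestr: "s \<in> S \<Longrightarrow> ((i,a),(j,c)) \<in> Cf s \<Longrightarrow> k \<le> n \<Longrightarrow> k \<le> j \<Longrightarrow> (d \<longrightarrow> c)
   \<Longrightarrow> ((min i k, a \<and> d),(k,d)) \<in> Cf s"
proof -
  assume a: "s \<in> S" "((i,a),(j,c)) \<in> Cf s" "k \<le> n" "k \<le> j" "(d \<longrightarrow> c)"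
  have "(gmeet (i,a) (k,d), (k,d)) \<in> Cf s"
    using Ccl[OF a(1)] a(2-5) unfolding closedC_def gle_def by fastforce
  thus ?thesis by (simp add: gmeet_def)
qed

lemma Sform: "((i,a),(j,c)) \<in> S \<Longrightarrow> j \<le> n \<and> i \<le> j \<and> (a \<longrightarrow> c) \<and> (i,a) \<noteq> (j,c)"
  using Ssub unfolding gle_def by fastforce

lemma finS: "finite S"
proof -
  have "S \<subseteq> ({..n} \<times> UNIV) \<times> ({..n} \<times> UNIV)"
    using Ssub unfolding gle_def by fastforce
  moreover have "finite (({..n} \<times> (UNIV::bool set)) \<times> ({..n} \<times> (UNIV::bool set)))" by simp
  ultimately show ?thesis using finite_subset by blast
qed

lemma same_source:
  assumes s: "((i,a),(j,c)) \<in> S" and t: "((i,a),(j',c')) \<in> S" and le: "j \<le> j'" "c \<longrightarrow> c'"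
  shows "j = j' \<and> c = c'"
proof (rule ccontr)
  assume ne: "\<not> (j = j' \<and> c = c')"
  have "((i,a),(j',c')) \<in> Cf ((i,a),(j,c))" using Cgen[OF s t] ne by auto
  from crestr[OF s this, of j c] Sform[OF s] le
  have "((min i j, a \<and> c),(j,c)) \<in> Cf ((i,a),(j,c))" by auto
  moreover have "min i j = i" "(a \<and> c) = a" using Sform[OF s] by auto
  ultimately show False using Cnot[OF s] by simp
qed

lemma Sobt: obtains i a j c where "s = ((i,a),(j,c))"
  by (metis prod.exhaust)

definition "TT = {s\<in>S. snd (fst s)}"
definition "BB = {s\<in>S. \<not> snd (snd s)}"
definition "VV = {s\<in>S. \<not> snd (fst s) \<and> snd (snd s)}"

definition "Rb s = Max {r. r \<le> n \<and> ((fst (fst s), False),(r,False)) \<in> Cf s}"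
definition "Rv s = Max {r. r \<le> n \<and> ((fst (fst s), False),(r,True)) \<in> Cf s}"

lemma Rb_props:
  assumes s: "((k,False),(c,False)) \<in> S"
  shows "k \<le> Rb ((k,False),(c,False))" "Rb ((k,False),(c,False)) < c"
    "((k,False),(Rb ((k,False),(c,False)),False)) \<in> Cf ((k,False),(c,False))"
    "\<And>r. r \<le> n \<Longrightarrow> ((k,False),(r,False)) \<in> Cf ((k,False),(c,False)) \<Longrightarrow> r \<le> Rb ((k,False),(c,False))"
proof -
  let ?s = "((k,False),(c,False))"
  let ?A = "{r. r \<le> n \<and> ((k, False),(r,False)) \<in> Cf ?s}"
  have fin: "finite ?A" by (rule finite_subset[of _ "{..n}"]) auto
  have kin: "k \<in> ?A" using Sform[OF s] crefl[OF s] by auto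
  have R: "Rb ?s = Max ?A" unfolding Rb_def by simp
  show "k \<le> Rb ?s" using R Max_ge[OF fin kin] by simp
  have "Max ?A \<in> ?A" using Max_in[OF fin] kin by blast
  thus mem: "((k,False),(Rb ?s,False)) \<in> Cf ?s" using R by auto
  show "\<And>r. r \<le> n \<Longrightarrow> ((k,False),(r,False)) \<in> Cf ?s \<Longrightarrow> r \<le> Rb ?s"
    using R Max_ge[OF fin] by auto
  show "Rb ?s < c"
  proof (rule ccontr)
    assume "\<not> Rb ?s < c"
    hence "c \<le> Rb ?s" by simp
    from crestr[OF s mem, of c False] this Sform[OF s]
    have "((min k c, False),(c,False)) \<in> Cf ?s" by auto
    moreover have "min k c = k" using Sform[OF s] by auto
    ultimately show False using Cnot[OF s] by simp
  qed
qed

lemma BB_aux: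
  assumes s: "((k,False),(c,False)) \<in> S" and s': "((k',False),(c',False)) \<in> S"
    and kk: "k < k'" and eq: "Rb ((k,False),(c,False)) = Rb ((k',False),(c',False))"
  shows False
proof -
  let ?s = "((k,False),(c,False))" let ?s' = "((k',False),(c',False))"
  let ?R = "Rb ?s"
  have "k' \<le> ?R" using Rb_props(1)[OF s'] eq by simp
  have m: "((k,False),(?R,False)) \<in> Cf ?s" using Rb_props(3)[OF s] .
  from crestr[OF s m, of k' False] \<open>k' \<le> ?R\<close> Sform[OF s']
  have "((min k k', False),(k',False)) \<in> Cf ?s" by auto
  hence a: "((k,False),(k',False)) \<in> Cf ?s" using kk by simp
  have b: "?s' \<in> Cf ?s" using Cgen[OF s s'] kk by auto
  have "((k,False),(c',False)) \<in> Cf ?s" using ctrans[OF s a b] .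
  hence "c' \<le> ?R" using Rb_props(4)[OF s] Sform[OF s'] by auto
  thus False using Rb_props(2)[OF s'] eq by simp
qed

lemma BB_inj:
  assumes s: "((k,False),(c,False)) \<in> S" and s': "((k',False),(c',False)) \<in> S"
    and eq: "Rb ((k,False),(c,False)) = Rb ((k',False),(c',False))"
  shows "k = k' \<and> c = c'"
proof -
  consider "k < k'" | "k' < k" | "k = k'" by linarith
  thus ?thesis
  proof cases
    case 1 thus ?thesis using BB_aux[OF s s' 1 eq] by simp
  next
    case 2 thus ?thesis using BB_aux[OF s' s 2] eq by simp
  next
    case 3
    show ?thesis
    proof (cases "c \<le> c'")
      case True thus ?thesis using same_source[of k False c False c' False] s s' 3 by auto
    next
      case False thus ?thesis using same_source[of k False c' False c False] s s' 3 by auto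
    qed
  qed
qed

lemma TT_BB:
  assumes s: "((i,True),(a,True)) \<in> S" and s': "((k,False),(c,False)) \<in> S"
    and eq: "i = Rb ((k,False),(c,False))"
  shows False
proof -
  let ?s' = "((k,False),(c,False))"
  have "((i,True),(a,True)) \<in> Cf ?s'" using Cgen[OF s' s] by auto
  from crestr[OF s' this, of a False] Sform[OF s]
  have "((min i a, False),(a,False)) \<in> Cf ?s'" by auto
  hence b: "((i,False),(a,False)) \<in> Cf ?s'" using Sform[OF s] by simp
  have a: "((k,False),(i,False)) \<in> Cf ?s'" using Rb_props(3)[OF s'] eq by simp
  have "a \<le> Rb ?s'" using Rb_props(4)[OF s' _ ctrans[OF s' a b]] Sform[OF s] by auto
  thus False using eq Sform[OF s] by auto
qed

lemma TT_src:
  assumes s: "((i,True),(a,True)) \<in> S" and s': "((i,True),(a',True)) \<in> S"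
  shows "a = a'"
proof (cases "a \<le> a'")
  case True thus ?thesis using same_source[OF s s'] by auto
next
  case False thus ?thesis using same_source[OF s' s] by auto
qed

lemma V_src:
  assumes s: "((i,False),(j,True)) \<in> S" and s': "((i,False),(j',True)) \<in> S"
  shows "j = j'"
proof (cases "j \<le> j'")
  case True thus ?thesis using same_source[OF s s'] by auto
next
  case False thus ?thesis using same_source[OF s' s] by auto
qed

lemma vert_avail:
  assumes s: "s \<in> S" and s': "((m,False),(j',True)) \<in> S" and ne: "s \<noteq> ((m,False),(j',True))"
    and im: "i < m"
  shows "((i,False),(i,True)) \<in> Cf s"
proof -
  have "((m,False),(j',True)) \<in> Cf s" using Cgen[OF s s' ne[symmetric]] .
  from crestr[OF s this, of i True] Sform[OF s'] im
  have "((min m i, False),(i,True)) \<in> Cf s" by auto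
  thus ?thesis using im by simp
qed

lemma V_nonlast:
  assumes s: "((i,False),(j,True)) \<in> S" and s': "((m,False),(j',True)) \<in> S" and im: "i < m"
  shows "i < j"
proof (rule ccontr)
  assume "\<not> i < j"
  hence "j = i" using Sform[OF s] by simp
  moreover have "((i,False),(i,True)) \<in> Cf ((i,False),(j,True))"
    using vert_avail[OF s s' _ im] im by auto
  ultimately show False using Cnot[OF s] by simp
qed

lemma V_BB:
  assumes s: "((i,False),(j,True)) \<in> S" and ij: "i < j" and s': "((k,False),(c,False)) \<in> S"
    and eq: "i = Rb ((k,False),(c,False))"
  shows False
proof -
  let ?s' = "((k,False),(c,False))"
  have "((i,False),(j,True)) \<in> Cf ?s'" using Cgen[OF s' s] by auto
  from crestr[OF s' this, of j False] Sform[OF s]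
  have b: "((i,False),(j,False)) \<in> Cf ?s'" by auto
  have a: "((k,False),(i,False)) \<in> Cf ?s'" using Rb_props(3)[OF s'] eq by simp
  have "j \<le> Rb ?s'" using Rb_props(4)[OF s' _ ctrans[OF s' a b]] Sform[OF s] by auto
  thus False using eq ij by auto
qed

lemma Rv_props:
  assumes s: "((i,False),(j,True)) \<in> S" and s': "((m,False),(j',True)) \<in> S" and im: "i < m"
  shows "i \<le> Rv ((i,False),(j,True))" "Rv ((i,False),(j,True)) < j"
    "((i,False),(Rv ((i,False),(j,True)),True)) \<in> Cf ((i,False),(j,True))"
    "\<And>r. r \<le> n \<Longrightarrow> ((i,False),(r,True)) \<in> Cf ((i,False),(j,True)) \<Longrightarrow> r \<le> Rv ((i,False),(j,True))"
proof -
  let ?s = "((i,False),(j,True))"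
  let ?A = "{r. r \<le> n \<and> ((i, False),(r,True)) \<in> Cf ?s}"
  have fin: "finite ?A" by (rule finite_subset[of _ "{..n}"]) auto
  have "((i,False),(i,True)) \<in> Cf ?s" using vert_avail[OF s s' _ im] im by auto
  hence kin: "i \<in> ?A" using Sform[OF s] by auto
  have R: "Rv ?s = Max ?A" unfolding Rv_def by simp
  show "i \<le> Rv ?s" using R Max_ge[OF fin kin] by simp
  have "Max ?A \<in> ?A" using Max_in[OF fin] kin by blast
  thus mem: "((i,False),(Rv ?s,True)) \<in> Cf ?s" using R by auto
  show "\<And>r. r \<le> n \<Longrightarrow> ((i,False),(r,True)) \<in> Cf ?s \<Longrightarrow> r \<le> Rv ?s"
    using R Max_ge[OF fin] by auto
  show "Rv ?s < j"
  proof (rule ccontr)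
    assume "\<not> Rv ?s < j"
    hence "j \<le> Rv ?s" by simp
    from crestr[OF s mem, of j True] this Sform[OF s]
    have "((min i j, False),(j,True)) \<in> Cf ?s" by auto
    moreover have "min i j = i" using Sform[OF s] by auto
    ultimately show False using Cnot[OF s] by simp
  qed
qed

lemma V_TT:
  assumes s: "((i,False),(j,True)) \<in> S" and s': "((m,False),(j',True)) \<in> S" and im: "i < m"
    and t: "((k,True),(a,True)) \<in> S" and eq: "k = Rv ((i,False),(j,True))"
  shows False
proof -
  let ?s = "((i,False),(j,True))"
  have b: "((k,True),(a,True)) \<in> Cf ?s" using Cgen[OF s t] by auto
  have a: "((i,False),(k,True)) \<in> Cf ?s" using Rv_props(3)[OF s s' im] eq by simp
  have "a \<le> Rv ?s" using Rv_props(4)[OF s s' im _ ctrans[OF s a b]] Sform[OF t] by auto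
  thus False using eq Sform[OF t] by auto
qed

lemma V_V:
  assumes s: "((i,False),(j,True)) \<in> S" and t: "((k,False),(e,True)) \<in> S"
    and s': "((m,False),(j',True)) \<in> S" and im: "i < m" and km: "k < m" and ik: "i < k"
    and eq: "Rv ((i,False),(j,True)) = Rv ((k,False),(e,True))"
  shows False
proof -
  let ?s = "((i,False),(j,True))" let ?t = "((k,False),(e,True))"
  let ?R = "Rv ?s"
  have "k \<le> ?R" using Rv_props(1)[OF t s' km] eq by simp
  have m: "((i,False),(?R,True)) \<in> Cf ?s" using Rv_props(3)[OF s s' im] .
  from crestr[OF s m, of k False] \<open>k \<le> ?R\<close> Sform[OF t]
  have "((min i k, False),(k,False)) \<in> Cf ?s" by auto
  hence a: "((i,False),(k,False)) \<in> Cf ?s" using ik by simp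
  have b: "?t \<in> Cf ?s" using Cgen[OF s t] ik by auto
  have "((i,False),(e,True)) \<in> Cf ?s" using ctrans[OF s a b] .
  hence "e \<le> ?R" using Rv_props(4)[OF s s' im] Sform[OF t] by auto
  thus False using Rv_props(2)[OF t s' km] eq by simp
qed

lemma finTT: "finite TT" and finBB: "finite BB" and finVV: "finite VV"
  using finS unfolding TT_def BB_def VV_def by auto

lemma L1: "card TT + card BB \<le> n"
proof -
  define g where "g s = (if snd (fst s) then fst (fst s) else Rb s)" for s
  have disj: "TT \<inter> BB = {}" using Sform unfolding TT_def BB_def by fastforce
  have formA: "\<exists>i j. s = ((i,True),(j,True)) \<and> s \<in> S \<or> s = ((i,False),(j,False)) \<and> s \<in> S"
    if "s \<in> TT \<union> BB" for s
  proof -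
    obtain i a j c where se: "s = ((i,a),(j,c))" by (rule Sobt)
    have sS: "((i,a),(j,c)) \<in> S" using that se unfolding TT_def BB_def by auto
    have "a \<longrightarrow> c" using Sform[OF sS] by simp
    moreover have "\<not> a \<longrightarrow> \<not> c" using that se unfolding TT_def BB_def by auto
    ultimately show ?thesis using se sS by (cases a) auto
  qed
  have inj: "inj_on g (TT \<union> BB)"
  proof (rule inj_onI)
    fix s s' assume sA: "s \<in> TT \<union> BB" and s'A: "s' \<in> TT \<union> BB" and geq: "g s = g s'"
    from formA[OF sA] obtain i j where
      sf: "s = ((i,True),(j,True)) \<and> s \<in> S \<or> s = ((i,False),(j,False)) \<and> s \<in> S" by blast
    from formA[OF s'A] obtain i' j' where
      s'f: "s' = ((i',True),(j',True)) \<and> s' \<in> S \<or> s' = ((i',False),(j',False)) \<and> s' \<in> S" by blast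
    from sf show "s = s'"
    proof
      assume A: "s = ((i,True),(j,True)) \<and> s \<in> S"
      from s'f show ?thesis
      proof
        assume B: "s' = ((i',True),(j',True)) \<and> s' \<in> S"
        have "i = i'" using geq A B unfolding g_def by simp
        thus ?thesis using TT_src[of i j j'] A B by auto
      next
        assume B: "s' = ((i',False),(j',False)) \<and> s' \<in> S"
        have "i = Rb ((i',False),(j',False))" using geq A B unfolding g_def by simp
        thus ?thesis using TT_BB[of i j i' j'] A B by auto
      qed
    next
      assume A: "s = ((i,False),(j,False)) \<and> s \<in> S"
      from s'f show ?thesis
      proof
        assume B: "s' = ((i',True),(j',True)) \<and> s' \<in> S"
        have "i' = Rb ((i,False),(j,False))" using geq A B unfolding g_def by simp
        thus ?thesis using TT_BB[of i' j' i j] A B by auto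
      next
        assume B: "s' = ((i',False),(j',False)) \<and> s' \<in> S"
        have "Rb ((i,False),(j,False)) = Rb ((i',False),(j',False))" using geq A B unfolding g_def by simp
        thus ?thesis using BB_inj[of i j i' j'] A B by auto
      qed
    qed
  qed
  have img: "g ` (TT \<union> BB) \<subseteq> {..<n}"
  proof
    fix y assume "y \<in> g ` (TT \<union> BB)"
    then obtain s where sA: "s \<in> TT \<union> BB" and y: "y = g s" by auto
    from formA[OF sA] obtain i j where
      sf: "s = ((i,True),(j,True)) \<and> s \<in> S \<or> s = ((i,False),(j,False)) \<and> s \<in> S" by blast
    thus "y \<in> {..<n}"
    proof
      assume A: "s = ((i,True),(j,True)) \<and> s \<in> S"
      hence "y = i" using y unfolding g_def by simp
      thus ?thesis using Sform[of i True j True] A by auto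
    next
      assume A: "s = ((i,False),(j,False)) \<and> s \<in> S"
      hence "y = Rb ((i,False),(j,False))" using y unfolding g_def by simp
      thus ?thesis using Rb_props(2)[of i j] Sform[of i False j False] A by auto
    qed
  qed
  have "card (TT \<union> BB) \<le> card {..<n}" by (rule card_inj_on_le[OF inj img]) auto
  thus ?thesis using card_Un_disjoint[OF finTT finBB disj] by simp
qed

lemma formV: "s \<in> VV \<Longrightarrow> \<exists>i j. s = ((i,False),(j,True)) \<and> s \<in> S"
proof -
  assume sA: "s \<in> VV"
  obtain i a j c where se: "s = ((i,a),(j,c))" by (rule Sobt)
  thus ?thesis using sA unfolding VV_def by auto
qed

lemma formB: "s \<in> BB \<Longrightarrow> \<exists>i j. s = ((i,False),(j,False)) \<and> s \<in> S"
proof -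
  assume sA: "s \<in> BB"
  obtain i a j c where se: "s = ((i,a),(j,c))" by (rule Sobt)
  have sS: "((i,a),(j,c)) \<in> S" using sA se unfolding BB_def by auto
  have "a \<longrightarrow> c" using Sform[OF sS] by simp
  thus ?thesis using sA se sS unfolding BB_def by auto
qed

lemma formT: "s \<in> TT \<Longrightarrow> \<exists>i j. s = ((i,True),(j,True)) \<and> s \<in> S"
proof -
  assume sA: "s \<in> TT"
  obtain i a j c where se: "s = ((i,a),(j,c))" by (rule Sobt)
  have sS: "((i,a),(j,c)) \<in> S" using sA se unfolding TT_def by auto
  have "a \<longrightarrow> c" using Sform[OF sS] by simp
  thus ?thesis using sA se sS unfolding TT_def by auto
qed

definition "mV = Max ((\<lambda>s. fst (fst s)) ` VV)"

lemma mV_props: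
  assumes ne: "VV \<noteq> {}"
  shows "\<exists>jm. ((mV,False),(jm,True)) \<in> S" "mV \<le> n"
    "\<And>i j. ((i,False),(j,True)) \<in> S \<Longrightarrow> i \<le> mV"
proof -
  have fin: "finite ((\<lambda>s. fst (fst s)) ` VV)" using finVV by simp
  have "mV \<in> (\<lambda>s. fst (fst s)) ` VV" unfolding mV_def using Max_in[OF fin] ne by simp
  then obtain s where sV: "s \<in> VV" and sm: "fst (fst s) = mV" by auto
  from formV[OF sV] obtain i j where sf: "s = ((i,False),(j,True)) \<and> s \<in> S" by blast
  thus "\<exists>jm. ((mV,False),(jm,True)) \<in> S" using sm by auto
  show "mV \<le> n" using sf sm Sform[of i False j True] by auto
  fix i j assume "((i,False),(j,True)) \<in> S"
  hence "((i,False),(j,True)) \<in> VV" unfolding VV_def by simp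
  hence "i \<in> (\<lambda>s. fst (fst s)) ` VV" by force
  thus "i \<le> mV" unfolding mV_def using Max_ge[OF fin] by simp
qed

lemma L3:
  assumes ne: "VV \<noteq> {}"
  shows "card VV + card BB \<le> n + 1"
proof -
  obtain jm where smS: "((mV,False),(jm,True)) \<in> S" using mV_props(1)[OF ne] by blast
  have mn: "mV \<le> n" using mV_props(2)[OF ne] .
  define g where "g s = (if snd (snd s) then (if fst (fst s) = mV then n else fst (fst s)) else Rb s)" for s
  have disj: "VV \<inter> BB = {}" unfolding VV_def BB_def by auto
  have formA: "\<exists>i j. s = ((i,False),(j,True)) \<and> s \<in> S \<or> s = ((i,False),(j,False)) \<and> s \<in> S"
    if "s \<in> VV \<union> BB" for s using that formV formB by blast
  have vcase: "i = mV \<or> (i < mV \<and> i < j)" if "((i,False),(j,True)) \<in> S" for i j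
    using mV_props(3)[OF ne that] V_nonlast[OF that smS] by linarith
  have inj: "inj_on g (VV \<union> BB)"
  proof (rule inj_onI)
    fix s s' assume sA: "s \<in> VV \<union> BB" and s'A: "s' \<in> VV \<union> BB" and geq: "g s = g s'"
    from formA[OF sA] obtain i j where
      sf: "s = ((i,False),(j,True)) \<and> s \<in> S \<or> s = ((i,False),(j,False)) \<and> s \<in> S" by blast
    from formA[OF s'A] obtain i' j' where
      s'f: "s' = ((i',False),(j',True)) \<and> s' \<in> S \<or> s' = ((i',False),(j',False)) \<and> s' \<in> S" by blast
    from sf show "s = s'"
    proof
      assume A: "s = ((i,False),(j,True)) \<and> s \<in> S"
      hence AS: "((i,False),(j,True)) \<in> S" by auto
      from s'f show ?thesis
      proof
        assume B: "s' = ((i',False),(j',True)) \<and> s' \<in> S"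
        hence BS: "((i',False),(j',True)) \<in> S" by auto
        have "i = i'" using geq A B vcase[OF AS] vcase[OF BS] mn unfolding g_def
          by (auto split: if_splits)
        thus ?thesis using V_src[of i j j'] A B by auto
      next
        assume B: "s' = ((i',False),(j',False)) \<and> s' \<in> S"
        hence BS: "((i',False),(j',False)) \<in> S" by auto
        have gg: "g s = Rb ((i',False),(j',False))" using geq B unfolding g_def by simp
        have "Rb ((i',False),(j',False)) < n" using Rb_props(2)[OF BS] Sform[OF BS] by simp
        hence "i \<noteq> mV" using gg A unfolding g_def by auto
        hence "i < j" "i = Rb ((i',False),(j',False))" using vcase[OF AS] gg A unfolding g_def by auto
        thus ?thesis using V_BB[OF AS _ BS] by blast
      qed
    next
      assume A: "s = ((i,False),(j,False)) \<and> s \<in> S"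
      hence AS: "((i,False),(j,False)) \<in> S" by auto
      from s'f show ?thesis
      proof
        assume B: "s' = ((i',False),(j',True)) \<and> s' \<in> S"
        hence BS: "((i',False),(j',True)) \<in> S" by auto
        have gg: "g s' = Rb ((i,False),(j,False))" using geq A unfolding g_def by simp
        have "Rb ((i,False),(j,False)) < n" using Rb_props(2)[OF AS] Sform[OF AS] by simp
        hence "i' \<noteq> mV" using gg B unfolding g_def by auto
        hence "i' < j'" "i' = Rb ((i,False),(j,False))" using vcase[OF BS] gg B unfolding g_def by auto
        thus ?thesis using V_BB[OF BS _ AS] by blast
      next
        assume B: "s' = ((i',False),(j',False)) \<and> s' \<in> S"
        have "Rb ((i,False),(j,False)) = Rb ((i',False),(j',False))" using geq A B unfolding g_def by simp
        thus ?thesis using BB_inj[of i j i' j'] A B by auto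
      qed
    qed
  qed
  have img: "g ` (VV \<union> BB) \<subseteq> {..n}"
  proof
    fix y assume "y \<in> g ` (VV \<union> BB)"
    then obtain s where sA: "s \<in> VV \<union> BB" and y: "y = g s" by auto
    from formA[OF sA] obtain i j where
      sf: "s = ((i,False),(j,True)) \<and> s \<in> S \<or> s = ((i,False),(j,False)) \<and> s \<in> S" by blast
    thus "y \<in> {..n}"
    proof
      assume A: "s = ((i,False),(j,True)) \<and> s \<in> S"
      thus ?thesis using y Sform[of i False j True] unfolding g_def by auto
    next
      assume A: "s = ((i,False),(j,False)) \<and> s \<in> S"
      hence "y = Rb ((i,False),(j,False))" using y unfolding g_def by simp
      thus ?thesis using Rb_props(2)[of i j] Sform[of i False j False] A by auto
    qed
  qed
  have "card (VV \<union> BB) \<le> card {..n}" by (rule card_inj_on_le[OF inj img]) auto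
  thus ?thesis using card_Un_disjoint[OF finVV finBB disj] by simp
qed

lemma L2:
  assumes ne: "VV \<noteq> {}"
  shows "card VV + card TT \<le> n + 1"
proof -
  obtain jm where smS: "((mV,False),(jm,True)) \<in> S" using mV_props(1)[OF ne] by blast
  have mn: "mV \<le> n" using mV_props(2)[OF ne] .
  define g where "g s = (if snd (fst s) then fst (fst s) else (if fst (fst s) = mV then n else Rv s))" for s
  have disj: "VV \<inter> TT = {}" unfolding VV_def TT_def by auto
  have formA: "\<exists>i j. s = ((i,False),(j,True)) \<and> s \<in> S \<or> s = ((i,True),(j,True)) \<and> s \<in> S"
    if "s \<in> VV \<union> TT" for s using that formV formT by blast
  have vcase: "i = mV \<or> (i < mV \<and> Rv ((i,False),(j,True)) < j)" if "((i,False),(j,True)) \<in> S" for i j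
    using mV_props(3)[OF ne that] Rv_props(2)[OF that smS] by linarith
  have inj: "inj_on g (VV \<union> TT)"
  proof (rule inj_onI)
    fix s s' assume sA: "s \<in> VV \<union> TT" and s'A: "s' \<in> VV \<union> TT" and geq: "g s = g s'"
    from formA[OF sA] obtain i j where
      sf: "s = ((i,False),(j,True)) \<and> s \<in> S \<or> s = ((i,True),(j,True)) \<and> s \<in> S" by blast
    from formA[OF s'A] obtain i' j' where
      s'f: "s' = ((i',False),(j',True)) \<and> s' \<in> S \<or> s' = ((i',True),(j',True)) \<and> s' \<in> S" by blast
    from sf show "s = s'"
    proof
      assume A: "s = ((i,False),(j,True)) \<and> s \<in> S"
      hence AS: "((i,False),(j,True)) \<in> S" by auto
      have jn: "j \<le> n" using Sform[OF AS] by simp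
      from s'f show ?thesis
      proof
        assume B: "s' = ((i',False),(j',True)) \<and> s' \<in> S"
        hence BS: "((i',False),(j',True)) \<in> S" by auto
        have jn': "j' \<le> n" using Sform[OF BS] by simp
        have gs: "g s = (if i = mV then n else Rv ((i,False),(j,True)))" using A unfolding g_def by simp
        have gs': "g s' = (if i' = mV then n else Rv ((i',False),(j',True)))" using B unfolding g_def by simp
        show ?thesis
        proof (cases "i = i'")
          case True thus ?thesis using V_src[of i j j'] A B by auto
        next
          case False
          have "i \<noteq> mV \<and> i' \<noteq> mV" using geq gs gs' vcase[OF AS] vcase[OF BS] jn jn' False
            by (auto split: if_splits)
          hence im: "i < mV" and im': "i' < mV" and eq: "Rv ((i,False),(j,True)) = Rv ((i',False),(j',True))"
            using geq gs gs' vcase[OF AS] vcase[OF BS] by auto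
          show ?thesis
          proof (cases "i < i'")
            case True thus ?thesis using V_V[OF AS BS smS im im' True eq] by blast
          next
            case False hence "i' < i" using \<open>i \<noteq> i'\<close> by simp
            thus ?thesis using V_V[OF BS AS smS im' im _ eq[symmetric]] by blast
          qed
        qed
      next
        assume B: "s' = ((i',True),(j',True)) \<and> s' \<in> S"
        hence BS: "((i',True),(j',True)) \<in> S" by auto
        have gg: "g s' = i'" using B unfolding g_def by simp
        have "i' < n" using Sform[OF BS] by auto
        hence "i \<noteq> mV" using geq gg A unfolding g_def by auto
        hence im: "i < mV" and "i' = Rv ((i,False),(j,True))" using vcase[OF AS] geq gg A unfolding g_def by auto
        thus ?thesis using V_TT[OF AS smS im BS] by blast
      qed
    next
      assume A: "s = ((i,True),(j,True)) \<and> s \<in> S"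
      hence AS: "((i,True),(j,True)) \<in> S" by auto
      from s'f show ?thesis
      proof
        assume B: "s' = ((i',False),(j',True)) \<and> s' \<in> S"
        hence BS: "((i',False),(j',True)) \<in> S" by auto
        have gg: "g s = i" using A unfolding g_def by simp
        have "i < n" using Sform[OF AS] by auto
        hence "i' \<noteq> mV" using geq gg B unfolding g_def by auto
        hence im: "i' < mV" and "i = Rv ((i',False),(j',True))" using vcase[OF BS] geq gg B unfolding g_def by auto
        thus ?thesis using V_TT[OF BS smS im AS] by blast
      next
        assume B: "s' = ((i',True),(j',True)) \<and> s' \<in> S"
        have "i = i'" using geq A B unfolding g_def by simp
        thus ?thesis using TT_src[of i j j'] A B by auto
      qed
    qed
  qed
  have img: "g ` (VV \<union> TT) \<subseteq> {..n}"
  proof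
    fix y assume "y \<in> g ` (VV \<union> TT)"
    then obtain s where sA: "s \<in> VV \<union> TT" and y: "y = g s" by auto
    from formA[OF sA] obtain i j where
      sf: "s = ((i,False),(j,True)) \<and> s \<in> S \<or> s = ((i,True),(j,True)) \<and> s \<in> S" by blast
    thus "y \<in> {..n}"
    proof
      assume A: "s = ((i,False),(j,True)) \<and> s \<in> S"
      hence AS: "((i,False),(j,True)) \<in> S" by auto
      show ?thesis using y A vcase[OF AS] Sform[OF AS] unfolding g_def by auto
    next
      assume A: "s = ((i,True),(j,True)) \<and> s \<in> S"
      thus ?thesis using y Sform[of i True j True] unfolding g_def by auto
    qed
  qed
  have "card (VV \<union> TT) \<le> card {..n}" by (rule card_inj_on_le[OF inj img]) auto
  thus ?thesis using card_Un_disjoint[OF finVV finTT disj] by simp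
qed

lemma main_bound: "2 * card S \<le> 3 * n + 2"
proof -
  have Seq: "S = (TT \<union> BB) \<union> VV" unfolding TT_def BB_def VV_def by auto
  have d1: "TT \<inter> BB = {}" using Sform unfolding TT_def BB_def by fastforce
  have d2: "(TT \<union> BB) \<inter> VV = {}" unfolding TT_def BB_def VV_def by auto
  have c: "card S = card TT + card BB + card VV"
    using Seq card_Un_disjoint[OF finite_UnI[OF finTT finBB] finVV d2] card_Un_disjoint[OF finTT finBB d1]
    by simp
  show ?thesis
  proof (cases "VV = {}")
    case True thus ?thesis using c L1 by simp
  next
    case False thus ?thesis using c L1 L2[OF False] L3[OF False] by simp
  qed
qed

end

lemma sub_dvd:
  assumes "group G" "subgroup K G" "subgroup H G" "K \<subseteq> H"
  shows "card K dvd card H"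
proof -
  interpret group G by fact
  have s: "subgroup K (G\<lparr>carrier := H\<rparr>)" using subgroup_incl assms by blast
  interpret HG: group "G\<lparr>carrier := H\<rparr>" using subgroup_imp_group assms by blast
  have "card (rcosets\<^bsub>G\<lparr>carrier := H\<rparr>\<^esub> K) * card K = order (G\<lparr>carrier := H\<rparr>)"
    using HG.lagrange[OF s] .
  hence "card (rcosets\<^bsub>G\<lparr>carrier := H\<rparr>\<^esub> K) * card K = card H" by (simp add: order_def)
  thus ?thesis by (metis dvd_triv_right)
qed

lemma ts_trans: "transfer_system G T \<Longrightarrow> (H,K) \<in> T \<Longrightarrow> (K,L) \<in> T \<Longrightarrow> (H,L) \<in> T"
  unfolding transfer_system_def by (elim conjE, erule allE[of _ H], erule allE[of _ K], erule allE[of _ L], simp)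
lemma ts_restr: "transfer_system G T \<Longrightarrow> (H,K) \<in> T \<Longrightarrow> subgroup L G \<Longrightarrow> L \<subseteq> K \<Longrightarrow> (H \<inter> L, L) \<in> T"
  unfolding transfer_system_def by (elim conjE, erule allE[of _ H], erule allE[of _ K], erule allE[of _ L], simp)
lemma gen_refl: assumes "subgroup H G" shows "(H,H) \<in> generated_ts G A"
  unfolding generated_ts_def
proof (rule InterI)
  fix T' assume "T' \<in> {T. transfer_system G T \<and> A \<subseteq> T}"
  thus "(H,H) \<in> T'" using assms unfolding transfer_system_def by simp
qed
lemma gen_trans: assumes "(H,K) \<in> generated_ts G A" "(K,L) \<in> generated_ts G A" shows "(H,L) \<in> generated_ts G A"
  unfolding generated_ts_def
proof (rule InterI)
  fix T' assume T': "T' \<in> {T. transfer_system G T \<and> A \<subseteq> T}"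
  have "(H,K) \<in> T'" "(K,L) \<in> T'" using assms T' unfolding generated_ts_def by auto
  thus "(H,L) \<in> T'" using T' ts_trans by blast
qed
lemma gen_restr: assumes "(H,K) \<in> generated_ts G A" "subgroup L G" "L \<subseteq> K" shows "(H \<inter> L, L) \<in> generated_ts G A"
  unfolding generated_ts_def
proof (rule InterI)
  fix T' assume T': "T' \<in> {T. transfer_system G T \<and> A \<subseteq> T}"
  have "(H,K) \<in> T'" using assms T' unfolding generated_ts_def by auto
  thus "(H \<inter> L, L) \<in> T'" using T' ts_restr assms by blast
qed
lemma gen_incl: "a \<in> A \<Longrightarrow> a \<in> generated_ts G A"
  unfolding generated_ts_def by blast
lemma gen_irr:
  assumes m: "minimal_generating_set G S T" and s: "s \<in> S"
  shows "s \<notin> generated_ts G (S - {s})"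
proof
  assume a: "s \<in> generated_ts G (S - {s})"
  have "generated_ts G (S - {s}) = generated_ts G S"
  proof
    show "generated_ts G (S - {s}) \<subseteq> generated_ts G S"
      unfolding generated_ts_def by blast
    show "generated_ts G S \<subseteq> generated_ts G (S - {s})"
    proof
      fix x assume x: "x \<in> generated_ts G S"
      show "x \<in> generated_ts G (S - {s})"
        unfolding generated_ts_def
      proof
        fix T' assume T': "T' \<in> {T. transfer_system G T \<and> S - {s} \<subseteq> T}"
        hence "s \<in> T'" using a unfolding generated_ts_def by blast
        hence "S \<subseteq> T'" using T' by blast
        thus "x \<in> T'" using x T' unfolding generated_ts_def by blast
      qed
    qed
  qed
  thus False using m s unfolding minimal_generating_set_def by blast
qed



locale cycgrp = comm_group G for G (structure) +
  fixes p q n :: nat and g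
  assumes pp: "prime p" and qp: "prime q" and pq: "p \<noteq> q"
    and ordG: "order G = p ^ n * q"
    and gG: "g \<in> carrier G" and gen: "carrier G = generate G {g}"
begin

definition E :: "nat \<Rightarrow> 'a set" where "E d = {y \<in> carrier G. y [^] d = \<one>}"

lemma Npos: "p ^ n * q > 0" using pp qp by (simp add: prime_gt_0_nat)

lemma finG: "finite (carrier G)"
  using ordG Npos unfolding order_def by (metis card.infinite less_irrefl)

lemma ordg: "ord g = p ^ n * q"
proof -
  have "carrier (subgroup_generated G {g}) = carrier G"
    using gen gG by (simp add: carrier_subgroup_generated)
  thus ?thesis using cyclic_order_is_ord[OF gG] ordG unfolding order_def by simp
qed

lemma carr: "carrier G = {g [^] k | k. k \<in> {0 .. ord g - 1}}"
proof -
  have "ord g \<noteq> 0" using ordg Npos by simp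
  hence "generate G {g} = {g [^] k | k. k \<in> (UNIV :: nat set)}" using generate_pow_nat gG by blast
  thus ?thesis using gen ord_elems[OF finG gG] by simp
qed

lemma E_sub: "subgroup (E d) G"
proof
  show "E d \<subseteq> carrier G" unfolding E_def by auto
  show "\<one> \<in> E d" unfolding E_def by simp
  fix x y assume x: "x \<in> E d" and y: "y \<in> E d"
  thus "x \<otimes> y \<in> E d" unfolding E_def by (simp add: nat_pow_distrib)
  show "inv x \<in> E d" using x unfolding E_def by (simp add: nat_pow_inv)
qed

lemma card_E:
  assumes d: "d dvd p ^ n * q"
  shows "card (E d) = d"
proof -
  define N where "N = p ^ n * q"
  obtain e where Ne: "N = d * e" using d unfolding N_def by blast
  have Npos': "N > 0" using Npos N_def by simp
  hence dpos: "d > 0" and epos: "e > 0" using Ne by auto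
  have og: "ord g = N" using ordg N_def by simp
  have img: "E d = (\<lambda>k. g [^] (k * e)) ` {..<d}"
  proof
    show "(\<lambda>k. g [^] (k * e)) ` {..<d} \<subseteq> E d"
    proof
      fix y assume "y \<in> (\<lambda>k. g [^] (k * e)) ` {..<d}"
      then obtain k where y: "y = g [^] (k * e)" by auto
      have "y [^] d = g [^] (k * e * d)" using y gG by (simp add: nat_pow_pow)
      also have "k * e * d = N * k" using Ne by simp
      also have "g [^] (N * k) = \<one>" using gG og pow_eq_id by simp
      finally show "y \<in> E d" unfolding E_def using y gG by simp
    qed
    show "E d \<subseteq> (\<lambda>k. g [^] (k * e)) ` {..<d}"
    proof
      fix y assume yE: "y \<in> E d"
      hence "y \<in> carrier G" unfolding E_def by simp
      then obtain k where k: "y = g [^] k" "k \<le> N - 1" using carr og by auto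
      have "g [^] (k * d) = \<one>" using yE k gG unfolding E_def by (simp add: nat_pow_pow)
      hence "N dvd k * d" using pow_eq_id gG og by simp
      hence "d * e dvd d * k" using Ne by (simp add: mult.commute)
      hence "e dvd k" using dpos by simp
      then obtain t where t: "k = e * t" by blast
      have "k < N" using k(2) Npos' by linarith
      hence "e * t < e * d" using t Ne by (simp add: mult.commute)
      hence "t < d" by simp
      thus "y \<in> (\<lambda>k. g [^] (k * e)) ` {..<d}" using k t by (auto simp: mult.commute)
    qed
  qed
  have inj: "inj_on (\<lambda>k. g [^] (k * e)) {..<d}"
  proof (rule inj_onI)
    fix a b assume a: "a \<in> {..<d}" and b: "b \<in> {..<d}" and eq: "g [^] (a * e) = g [^] (b * e)"
    have "a * e < d * e" "b * e < d * e" using a b epos by auto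
    hence "a * e \<in> {0 .. ord g - 1}" "b * e \<in> {0 .. ord g - 1}" using og Ne by (simp_all add: less_Suc_eq_le[symmetric])
    hence "a * e = b * e" using ord_inj[OF gG] eq unfolding inj_on_def by blast
    thus "a = b" using epos by simp
  qed
  show ?thesis using img card_image[OF inj] by simp
qed

lemma card_sub_dvd: "subgroup H G \<Longrightarrow> card H dvd p ^ n * q"
  using lagrange[of H] ordG by (metis dvd_triv_right)

lemma E_card:
  assumes H: "subgroup H G"
  shows "E (card H) = H"
proof -
  have sub: "H \<subseteq> E (card H)"
  proof
    fix y assume yH: "y \<in> H"
    have yG: "y \<in> carrier G" using yH subgroup.subset[OF H] by blast
    have "generate G {y} \<subseteq> H" using generate_subgroup_incl[OF _ H] yH by blast
    hence "card (generate G {y}) dvd card H"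
      using sub_dvd[OF is_group generate_is_subgroup[of "{y}"] H] yG by blast
    hence "ord y dvd card H" using generate_pow_card[OF yG] by simp
    thus "y \<in> E (card H)" unfolding E_def using pow_eq_id yG by simp
  qed
  have fin: "finite (E (card H))" using finG unfolding E_def by simp
  have "card (E (card H)) = card H" using card_E[OF card_sub_dvd[OF H]] .
  thus ?thesis using card_subset_eq[OF fin sub] by simp
qed

definition lab :: "pt \<Rightarrow> nat" where "lab x = p ^ fst x * (if snd x then q else 1)"
definition P :: "pt \<Rightarrow> 'a set" where "P x = E (lab x)"

lemma lab_dvd_iff: "lab x dvd lab y \<longleftrightarrow> gle x y"
proof
  assume "gle x y"
  hence "p ^ fst x dvd p ^ fst y" "(if snd x then q else 1) dvd (if snd y then q else 1)"
    unfolding gle_def by (auto simp: le_imp_power_dvd)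
  thus "lab x dvd lab y" unfolding lab_def by (rule mult_dvd_mono)
next
  assume d: "lab x dvd lab y"
  have cop: "coprime (p ^ fst x) (if snd y then q else 1)"
    using pp qp pq by (auto simp: primes_coprime)
  have "p ^ fst x dvd p ^ fst y * (if snd y then q else 1)"
    using d unfolding lab_def by (meson dvd_mult_left)
  hence "p ^ fst x dvd p ^ fst y" using cop by (metis coprime_dvd_mult_left_iff)
  hence i: "fst x \<le> fst y" using pp by (meson power_dvd_imp_le prime_gt_1_nat)
  have "snd y" if sx: "snd x"
  proof (rule ccontr)
    assume "\<not> snd y"
    hence "q dvd p ^ fst y" using d sx unfolding lab_def by (metis (full_types) \<open>\<not> snd y\<close> dvd_mult_right mult.right_neutral)
    hence "q dvd p" using qp prime_dvd_power by blast
    thus False using pp qp pq primes_dvd_imp_eq by blast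
  qed
  thus "gle x y" using i unfolding gle_def by auto
qed

lemma lab_dvd_N: "fst x \<le> n \<Longrightarrow> lab x dvd p ^ n * q"
proof -
  assume "fst x \<le> n"
  hence "lab x dvd lab (n, True)" using lab_dvd_iff unfolding gle_def by simp
  thus ?thesis unfolding lab_def by simp
qed

lemma dvd_N_lab:
  assumes "d dvd p ^ n * q"
  shows "\<exists>x. fst x \<le> n \<and> d = lab x"
proof -
  obtain b c where bc: "d = b * c" "b dvd p ^ n" "c dvd q" using division_decomp[OF assms] by blast
  obtain i where i: "i \<le> n" "b = p ^ i" using bc(2) divides_primepow_nat[OF pp] by blast
  have "c = 1 \<or> c = q" using bc(3) qp by (simp add: prime_nat_iff)
  thus ?thesis
  proof
    assume "c = 1" thus ?thesis using bc i by (intro exI[of _ "(i, False)"]) (simp add: lab_def)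
  next
    assume "c = q" thus ?thesis using bc i by (intro exI[of _ "(i, True)"]) (simp add: lab_def)
  qed
qed

lemma P_sub: "subgroup (P x) G" unfolding P_def by (rule E_sub)

lemma card_P: "fst x \<le> n \<Longrightarrow> card (P x) = lab x"
  unfolding P_def by (rule card_E[OF lab_dvd_N])

lemma P_mono: "gle x y \<Longrightarrow> P x \<subseteq> P y"
proof -
  assume "gle x y"
  then obtain k where k: "lab y = lab x * k" using lab_dvd_iff by blast
  show ?thesis unfolding P_def E_def
  proof (auto)
    fix z assume "z \<in> carrier G" "z [^] lab x = \<one>"
    thus "z [^] lab y = \<one>" using k by (simp add: nat_pow_pow[symmetric])
  qed
qed

lemma P_le: "fst x \<le> n \<Longrightarrow> fst y \<le> n \<Longrightarrow> P x \<subseteq> P y \<Longrightarrow> gle x y"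
proof -
  assume x: "fst x \<le> n" and y: "fst y \<le> n" and s: "P x \<subseteq> P y"
  have "card (P x) dvd card (P y)" using sub_dvd[OF is_group P_sub P_sub s] .
  thus ?thesis using card_P[OF x] card_P[OF y] lab_dvd_iff by simp
qed

lemma gle_antisym: "gle x y \<Longrightarrow> gle y x \<Longrightarrow> x = y"
  unfolding gle_def by (cases x, cases y) auto

lemma P_inj: "fst x \<le> n \<Longrightarrow> fst y \<le> n \<Longrightarrow> P x = P y \<Longrightarrow> x = y"
  using P_le gle_antisym by blast

lemma sub_P: "subgroup H G \<Longrightarrow> \<exists>x. fst x \<le> n \<and> P x = H"
proof -
  assume H: "subgroup H G"
  obtain x where x: "fst x \<le> n" "card H = lab x" using dvd_N_lab[OF card_sub_dvd[OF H]] by blast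
  hence "P x = H" using E_card[OF H] unfolding P_def by simp
  thus ?thesis using x(1) by blast
qed

definition Q :: "'a set \<Rightarrow> pt" where "Q H = (SOME x. fst x \<le> n \<and> P x = H)"

lemma Q_props: "subgroup H G \<Longrightarrow> fst (Q H) \<le> n \<and> P (Q H) = H"
  unfolding Q_def by (rule someI_ex, rule sub_P)

lemma P_meet:
  assumes x: "fst x \<le> n" and z: "fst z \<le> n"
  shows "P x \<inter> P z = P (gmeet x z)"
proof -
  have "subgroup (P x \<inter> P z) G" using subgroups_Inter_pair P_sub by blast
  then obtain w where w: "fst w \<le> n" "P w = P x \<inter> P z" using sub_P by blast
  have m: "fst (gmeet x z) \<le> n" using x unfolding gmeet_def by simp
  have "gle (gmeet x z) x" "gle (gmeet x z) z" unfolding gmeet_def gle_def by auto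
  hence "P (gmeet x z) \<subseteq> P w" using w P_mono by blast
  hence a: "gle (gmeet x z) w" using P_le[OF m w(1)] by blast
  have "gle w x" "gle w z" using w P_le[OF w(1) x] P_le[OF w(1) z] by auto
  hence b: "gle w (gmeet x z)" unfolding gmeet_def gle_def by auto
  show ?thesis using gle_antisym[OF a b] w by simp
qed

lemma bound:
  assumes m: "minimal_generating_set G S T"
  shows "2 * card S \<le> 3 * n + 2"
proof -
  have Sarr: "subgroup (fst s) G \<and> subgroup (snd s) G \<and> fst s \<subseteq> snd s \<and> fst s \<noteq> snd s"
    if "s \<in> S" for s
  proof -
    have "s \<in> arrows G" "fst s \<noteq> snd s" using m that unfolding minimal_generating_set_def by auto
    thus ?thesis unfolding arrows_def by auto
  qed
  define f where "f s = (Q (fst s), Q (snd s))" for s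
  define S' where "S' = f ` S"
  have QF: "fst (Q (fst s)) \<le> n" "P (Q (fst s)) = fst s" "fst (Q (snd s)) \<le> n" "P (Q (snd s)) = snd s"
    if "s \<in> S" for s
    using Q_props[of "fst s"] Q_props[of "snd s"] Sarr[OF that] by auto
  have PQ: "(P (fst (f s)), P (snd (f s))) = s" if "s \<in> S" for s
    using QF[OF that] unfolding f_def by simp
  have inj: "inj_on f S"
  proof (rule inj_onI)
    fix s t assume st: "s \<in> S" "t \<in> S" "f s = f t"
    have "s = (P (fst (f s)), P (snd (f s)))" using PQ[OF st(1)] by simp
    also have "\<dots> = (P (fst (f t)), P (snd (f t)))" using st(3) by simp
    also have "\<dots> = t" using PQ[OF st(2)] by simp
    finally show "s = t" .
  qed
  define Cf where "Cf s' = {(x,y). fst x \<le> n \<and> fst y \<le> n \<and>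
      (P x, P y) \<in> generated_ts G (S - {(P (fst s'), P (snd s'))})}" for s'
  interpret cc: combctx n S' Cf
  proof
    fix x y assume "(x,y) \<in> S'"
    then obtain s where s: "s \<in> S" and xy: "x = Q (fst s)" "y = Q (snd s)"
      unfolding S'_def f_def by auto
    have a: "fst x \<le> n" "fst y \<le> n" "P x = fst s" "P y = snd s" using QF[OF s] xy by auto
    have b: "fst s \<subseteq> snd s" "fst s \<noteq> snd s" using Sarr[OF s] by auto
    have "gle x y" using P_le[OF a(1) a(2)] a(3) a(4) b(1) by simp
    moreover have "x \<noteq> y" using a(3) a(4) b(2) by auto
    ultimately show "fst y \<le> n \<and> gle x y \<and> x \<noteq> y" using a(2) by simp
  next
    fix s' assume "s' \<in> S'"
    show "closedC n (Cf s')"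
      unfolding closedC_def
    proof (intro conjI allI impI)
      fix x :: pt assume "fst x \<le> n"
      thus "(x,x) \<in> Cf s'" unfolding Cf_def using gen_refl[OF P_sub] by simp
    next
      fix x y z :: pt assume "(x,y) \<in> Cf s'" "(y,z) \<in> Cf s'"
      thus "(x,z) \<in> Cf s'" unfolding Cf_def using gen_trans by blast
    next
      fix x y z :: pt assume xy: "(x,y) \<in> Cf s'" and z: "fst z \<le> n" and le: "gle z y"
      have x: "fst x \<le> n" and g: "(P x, P y) \<in> generated_ts G (S - {(P (fst s'), P (snd s'))})"
        using xy unfolding Cf_def by auto
      have "(P x \<inter> P z, P z) \<in> generated_ts G (S - {(P (fst s'), P (snd s'))})"
        by (rule gen_restr[OF g P_sub P_mono[OF le]])
      hence "(P (gmeet x z), P z) \<in> generated_ts G (S - {(P (fst s'), P (snd s'))})"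
        using P_meet[OF x z] by simp
      moreover have "fst (gmeet x z) \<le> n" using x unfolding gmeet_def by simp
      ultimately show "(gmeet x z, z) \<in> Cf s'" unfolding Cf_def using z by simp
    qed
  next
    fix s' t' assume s': "s' \<in> S'" and t': "t' \<in> S'" and ne: "t' \<noteq> s'"
    obtain s where s: "s \<in> S" "s' = f s" using s' unfolding S'_def by auto
    obtain t where t: "t \<in> S" "t' = f t" using t' unfolding S'_def by auto
    have "t \<noteq> s" using ne s t by auto
    hence "t \<in> S - {s}" using t by simp
    hence g: "t \<in> generated_ts G (S - {s})" by (rule gen_incl)
    have ps: "(P (fst s'), P (snd s')) = s" using PQ[OF s(1)] s(2) by simp
    have pt: "(P (fst t'), P (snd t')) = t" using PQ[OF t(1)] t(2) by simp
    have tn: "fst (fst t') \<le> n" "fst (snd t') \<le> n" using QF[OF t(1)] t(2) unfolding f_def by auto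
    obtain x y where xy: "t' = (x,y)" by (cases t')
    show "t' \<in> Cf s'" unfolding Cf_def ps using g pt tn xy by simp
  next
    fix s' assume s': "s' \<in> S'"
    obtain s where s: "s \<in> S" "s' = f s" using s' unfolding S'_def by auto
    have ps: "(P (fst s'), P (snd s')) = s" using PQ[OF s(1)] s(2) by simp
    have "s \<notin> generated_ts G (S - {s})" by (rule gen_irr[OF m s(1)])
    moreover obtain x y where xy: "s' = (x,y)" by (cases s')
    ultimately show "s' \<notin> Cf s'" unfolding Cf_def using ps by simp
  qed
  have "2 * card S' \<le> 3 * n + 2" by (rule cc.main_bound)
  thus ?thesis using card_image[OF inj] unfolding S'_def by simp
qed

end

theorem corollary6p4:
  fixes G :: "('a, 'b) monoid_scheme" and p q n :: nat
    and S T :: "('a set \<times> 'a set) set"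
  assumes "group G" and "cyclic_group G"
    and "prime p" and "prime q" and "p \<noteq> q" and "n \<ge> 1"
    and "order G = p ^ n * q"
    and "transfer_system G T"
    and "minimal_generating_set G S T"
  shows "(\<forall>k. n = 2 * k \<longrightarrow> card S \<le> 3 * k + 1) \<and>
         (\<forall>k. n = 2 * k + 1 \<longrightarrow> card S \<le> 3 * k + 2)"
proof -
  interpret group G by fact
  have cg: "comm_group G" using cyclic_imp_abelian_group assms(2) by blast
  obtain g where g: "g \<in> carrier G" "subgroup_generated G {g} = G"
    using assms(2) unfolding cyclic_group_def by blast
  have "carrier G = carrier (subgroup_generated G {g})" using g(2) by simp
  also have "\<dots> = generate G (carrier G \<inter> {g})" by (rule carrier_subgroup_generated)
  also have "carrier G \<inter> {g} = {g}" using g(1) by auto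
  finally have gen: "carrier G = generate G {g}" .
  interpret cy: cycgrp G p q n g
    using cg assms(3,4,5,7) g(1) gen by (intro cycgrp.intro cycgrp_axioms.intro) auto
  have b: "2 * card S \<le> 3 * n + 2" by (rule cy.bound[OF assms(9)])
  show ?thesis using b by auto
qed

end
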